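(* Assume the seeds are i.i.d. uniform on $[n]$. Fix $m\in\mathbb N$. Let $\mathcal E^*(m)$ be the set of maximizers of $\eta\mapsto p(\infty,m,\eta)$ over $[0,\tfrac12]$, and assume $\mathcal E^*(m)\subset(0,\tfrac12)$. For each even $n\ge6$ let $l_{opt}(n,m)\in\operatorname{arg\,max}_{l\in\{2,\dots,n/2-1\}}p_1(n,m,l)$. Then $$\lim_{n\to\infty}\ \inf_{\eta^*\in\mathcal E^*(m)}\Bigl|\frac{l_{opt}(n,m)}{n}-\eta^*\Bigr|=0.$$ If moreover $\mathcal E^*(m)=\{\eta_{opt}(m)\}$ is a singleton, then $\lim_{n\to\infty}l_{opt}(n,m)/n=\eta_{opt}(m)$.
   Context: Discrete model: candidates $[n]$, $m$ voters; voter $j$ has the clockwise oriented preference list $(s_j,s_j+1,\dots,n,1,\dots,s_j-1)$ with seed $s_j$; seeds independent uniform on $[n]$. In an election among a non-empty $S\subseteq[n]$ each voter votes for the first candidate of $S$ in its list; $\Xi_S(i)$ is the number of votes for $i$. Two-round election with partition $(A,B)$: the winner of $A$ is the $a\in A$ with $\Xi_A(a)>\Xi_A(a')$ for all other $a'\in A$ (if none, nobody wins); likewise for $B$; between first-round winners $a,b$, $a$ wins iff $\Xi_{\{a,b\}}(a)>\Xi_{\{a,b\}}(b)$ (ties: nobody wins). $A^{(1,n,l)}=\{1,\dots,l\}\cup\{l+2i:1\le i\le(n-2l)/2\}$, $B^{(1,n,l)}=[n]\setminus A^{(1,n,l)}$, and $p_1(n,m,l)$ is the probability that candidate 1 wins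 with partition $(A^{(1,n,l)},B^{(1,n,l)})$. Continuous model: $U_1,\dots,U_m$ i.i.d. uniform on $[0,1)$, $N_{(a,b)}$ the number of $U_j$ in the arc $(a,b)$ mod 1; $p(\infty,m,\eta)=\mathsf P(N_{(1-\eta,1)}\ge2,\ N_{(0,\eta)}\ge2,\ N_{(0,\eta)}<m/2)$, equivalently the polynomial $\sum_{s=2}^{\lfloor (m-1)/2\rfloor}\sum_{t=2}^{m-s}\frac{m!}{s!\,t!\,(m-s-t)!}\eta^{s+t}(1-2\eta)^{m-s-t}$, considered for $\eta\in[0,\tfrac12]$. *)

theory Defs
  imports "HOL-Analysis.Analysis" "HOL-Library.FuncSet"
begin

text \<open>Candidates are 1..n. A voter with seed s ranks candidates clockwise
  s, s+1, ..., n, 1, ..., s-1; the position of candidate i in that list is cdist n s i.\<close>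
definition cdist :: "nat \<Rightarrow> nat \<Rightarrow> nat \<Rightarrow> nat" where
  "cdist n s i = (i + n - s) mod n"

definition first_in :: "nat \<Rightarrow> nat set \<Rightarrow> nat \<Rightarrow> nat" where
  "first_in n S s = (THE a. a \<in> S \<and> (\<forall>b\<in>S. cdist n s a \<le> cdist n s b))"

definition Xi :: "nat \<Rightarrow> nat \<Rightarrow> (nat \<Rightarrow> nat) \<Rightarrow> nat set \<Rightarrow> nat \<Rightarrow> nat" where
  "Xi n m seeds S i = card {j \<in> {..<m}. first_in n S (seeds j) = i}"

definition winner :: "nat \<Rightarrow> nat \<Rightarrow> (nat \<Rightarrow> nat) \<Rightarrow> nat set \<Rightarrow> nat option" where
  "winner n m seeds S =
     (if \<exists>a\<in>S. \<forall>a'\<in>S. a' \<noteq> a \<longrightarrow> Xi n m seeds S a > Xi n m seeds S a'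
      then Some (THE a. a \<in> S \<and> (\<forall>a'\<in>S. a' \<noteq> a \<longrightarrow> Xi n m seeds S a > Xi n m seeds S a'))
      else None)"

definition wins_two_round ::
  "nat \<Rightarrow> nat \<Rightarrow> (nat \<Rightarrow> nat) \<Rightarrow> nat set \<Rightarrow> nat set \<Rightarrow> nat \<Rightarrow> bool" where
  "wins_two_round n m seeds A B i =
     (\<exists>a b. winner n m seeds A = Some a \<and> winner n m seeds B = Some b \<and>
        ((i = a \<and> Xi n m seeds {a, b} a > Xi n m seeds {a, b} b) \<or>
         (i = b \<and> Xi n m seeds {a, b} b > Xi n m seeds {a, b} a)))"

definition Apart :: "nat \<Rightarrow> nat \<Rightarrow> nat set" where
  "Apart n l = {1..l} \<union> {l + 2 * i | i. 1 \<le> i \<and> i \<le> (n - 2 * l) div 2}"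

definition Bpart :: "nat \<Rightarrow> nat \<Rightarrow> nat set" where
  "Bpart n l = {1..n} - Apart n l"

text \<open>p_1(n,m,l): seeds i.i.d. uniform on [n], i.e. uniform on the n^m seed vectors.\<close>
definition p1 :: "nat \<Rightarrow> nat \<Rightarrow> nat \<Rightarrow> real" where
  "p1 n m l = real (card {seeds \<in> {..<m} \<rightarrow>\<^sub>E {1..n}.
                    wins_two_round n m seeds (Apart n l) (Bpart n l) 1}) / real n ^ m"

text \<open>p(infinity,m,eta), as the polynomial given in the paper.\<close>
definition p_inf :: "nat \<Rightarrow> real \<Rightarrow> real" where
  "p_inf m \<eta> = (\<Sum>s = 2..(m - 1) div 2. \<Sum>t = 2..m - s.
      fact m / (fact s * fact t * fact (m - s - t)) * \<eta> ^ (s + t) * (1 - 2 * \<eta>) ^ (m - s - t))"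

definition Estar :: "nat \<Rightarrow> real set" where
  "Estar m = {\<eta> \<in> {0..1/2}. \<forall>\<eta>' \<in> {0..1/2}. p_inf m \<eta>' \<le> p_inf m \<eta>}"

end

theory Submission
  imports Defs
begin
lemma cdist_eq:
  assumes "1 \<le> s" "s \<le> n" "1 \<le> i" "i \<le> n"
  shows "cdist n s i = (if s \<le> i then i - s else i + n - s)"
proof (cases "s \<le> i")
  case True
  then have e: "i + n - s = (i - s) + n" using assms by simp
  have "cdist n s i = ((i - s) + n) mod n" unfolding cdist_def e ..
  also have "\<dots> = (i - s) mod n" by simp
  also have "\<dots> = i - s" using assms True by (intro mod_less) linarith
  finally show ?thesis using True by simp
next
  case False
  then show ?thesis using assms by (simp add: cdist_def)
qed

lemma first_in_eq:
  assumes S: "S \<subseteq> {1..n}" and s: "s \<in> {1..n}" and a: "a \<in> S"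
    and min: "\<forall>b\<in>S. cdist n s a \<le> cdist n s b"
  shows "first_in n S s = a"
  unfolding first_in_def
proof (rule the_equality)
  show "a \<in> S \<and> (\<forall>b\<in>S. cdist n s a \<le> cdist n s b)" using a min by blast
next
  fix b assume b: "b \<in> S \<and> (\<forall>c\<in>S. cdist n s b \<le> cdist n s c)"
  then have "cdist n s a = cdist n s b" using a min by (meson antisym)
  moreover have "a \<in> {1..n}" "b \<in> {1..n}" using a b S by auto
  ultimately show "b = a" using s
    by (auto simp: cdist_eq split: if_splits)
qed

lemma Apart_mem:
  "b \<in> Apart n l \<longleftrightarrow> (1 \<le> b \<and> b \<le> l) \<or> (l < b \<and> b + l \<le> n \<and> even (b - l))"
proof
  assume "b \<in> Apart n l"
  then consider "1 \<le> b \<and> b \<le> l" | i where "b = l + 2*i" "1 \<le> i" "i \<le> (n - 2*l) div 2"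
    unfolding Apart_def by auto
  then show "(1 \<le> b \<and> b \<le> l) \<or> (l < b \<and> b + l \<le> n \<and> even (b - l))"
  proof cases
    case 1 then show ?thesis by simp
  next
    case 2
    then have "2*i \<le> n - 2*l" by linarith
    then show ?thesis using 2 by auto
  qed
next
  assume h: "(1 \<le> b \<and> b \<le> l) \<or> (l < b \<and> b + l \<le> n \<and> even (b - l))"
  show "b \<in> Apart n l"
  proof (cases "1 \<le> b \<and> b \<le> l")
    case True then show ?thesis unfolding Apart_def by auto
  next
    case False
    then have h2: "l < b" "b + l \<le> n" "even (b - l)" using h by auto
    from h2(3) obtain i where i: "b - l = 2*i" by (rule evenE)
    have "b = l + 2*i" "1 \<le> i" "i \<le> (n - 2*l) div 2" using i h2 by auto
    then show ?thesis unfolding Apart_def by blast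
  qed
qed

definition fA :: "nat \<Rightarrow> nat \<Rightarrow> nat \<Rightarrow> nat" where
  "fA n l s = (if s = 1 \<or> n - l < s then 1 else if s \<le> l then s else if even (s - l) then s else s + 1)"

lemma Apart_sub: "Apart n l \<subseteq> {1..n}" if "2 * l + 2 \<le> n"
  using that by (auto simp: Apart_mem)

lemma first_in_A:
  assumes n: "even n" "2 * l + 2 \<le> n" "2 \<le> l" and s: "1 \<le> s" "s \<le> n"
  shows "first_in n (Apart n l) s = fA n l s"
proof (rule first_in_eq[OF Apart_sub[OF n(2)]])
  show "s \<in> {1..n}" using s by simp
  have en: "even (n - l - l)" using n(1) by simp
  show "fA n l s \<in> Apart n l"
  proof (cases "s = 1 \<or> n - l < s")
    case True then show ?thesis using n by (simp add: fA_def Apart_mem)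
  next
    case F1: False
    show ?thesis
    proof (cases "s \<le> l")
      case True then show ?thesis using F1 s n by (simp add: fA_def Apart_mem)
    next
      case F2: False
      show ?thesis
      proof (cases "even (s - l)")
        case True then show ?thesis using F1 F2 s n by (simp add: fA_def Apart_mem)
      next
        case False
        then have "s \<noteq> n - l" using en by auto
        moreover have "s + 1 - l = (s - l) + 1" using F2 by simp
        ultimately show ?thesis using False F1 F2 s n by (simp add: fA_def Apart_mem)
      qed
    qed
  qed
  show "\<forall>b\<in>Apart n l. cdist n s (fA n l s) \<le> cdist n s b"
  proof
    fix b assume b: "b \<in> Apart n l"
    then have b1: "1 \<le> b" "b \<le> n - l" using n by (auto simp: Apart_mem)
    have cb: "cdist n s b = (if s \<le> b then b - s else b + n - s)"
      using b1 s n by (intro cdist_eq) auto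
    show "cdist n s (fA n l s) \<le> cdist n s b"
    proof (cases "s = 1")
      case True then show ?thesis by (simp add: fA_def cdist_def)
    next
      case N1: False
      show ?thesis
      proof (cases "n - l < s")
        case True
        then have "fA n l s = 1" by (simp add: fA_def)
        then have "cdist n s (fA n l s) = 1 + n - s" using s N1 by (simp add: cdist_eq)
        then show ?thesis using cb b1 True by simp
      next
        case F1: False
        show ?thesis
        proof (cases "s \<le> l \<or> even (s - l)")
          case True
          then have "fA n l s = s" using F1 N1 by (auto simp: fA_def)
          then show ?thesis by (simp add: cdist_def)
        next
          case False
          then have fa: "fA n l s = s + 1" using F1 N1 by (auto simp: fA_def)
          have "s + 1 \<le> n" using F1 n by linarith
          then have "cdist n s (fA n l s) = 1" using fa s by (simp add: cdist_eq)
          moreover have "b \<noteq> s" using b False by (auto simp: Apart_mem)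
          ultimately show ?thesis using cb b1 s by auto
        qed
      qed
    qed
  qed
qed

definition fB :: "nat \<Rightarrow> nat \<Rightarrow> nat \<Rightarrow> nat" where
  "fB n l s = (if s \<le> l + 1 then l + 1 else if s \<le> n - l \<and> even (s - l) then s + 1 else s)"

definition fF :: "nat \<Rightarrow> nat \<Rightarrow> nat" where
  "fF l s = (if 2 \<le> s \<and> s \<le> l + 1 then l + 1 else 1)"

lemma Bpart_mem: "b \<in> Bpart n l \<longleftrightarrow> 1 \<le> b \<and> b \<le> n \<and> \<not> ((1 \<le> b \<and> b \<le> l) \<or> (l < b \<and> b + l \<le> n \<and> even (b - l)))"
  by (auto simp: Bpart_def Apart_mem)

lemma first_in_B:
  assumes n: "even n" "2 * l + 2 \<le> n" "2 \<le> l" and s: "1 \<le> s" "s \<le> n"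
  shows "first_in n (Bpart n l) s = fB n l s"
proof (rule first_in_eq)
  show "Bpart n l \<subseteq> {1..n}" by (auto simp: Bpart_def)
  show "s \<in> {1..n}" using s by simp
  show "fB n l s \<in> Bpart n l"
  proof (cases "s \<le> l + 1")
    case True then show ?thesis using n by (simp add: fB_def Bpart_mem)
  next
    case F1: False
    show ?thesis
    proof (cases "s \<le> n - l \<and> even (s - l)")
      case True
      moreover have "s + 1 - l = (s - l) + 1" using F1 by simp
      moreover have "s + 1 \<le> n" using True n by linarith
      ultimately show ?thesis using F1 s n by (simp add: fB_def Bpart_mem)
    next
      case False then show ?thesis using F1 s n by (auto simp add: fB_def Bpart_mem)
    qed
  qed
  show "\<forall>b\<in>Bpart n l. cdist n s (fB n l s) \<le> cdist n s b"
  proof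
    fix b assume b: "b \<in> Bpart n l"
    then have b1: "l + 1 \<le> b" "b \<le> n" by (auto simp: Bpart_mem)
    have cb: "cdist n s b = (if s \<le> b then b - s else b + n - s)"
      using b1 s n by (intro cdist_eq) auto
    show "cdist n s (fB n l s) \<le> cdist n s b"
    proof (cases "s \<le> l + 1")
      case True
      then have "cdist n s (fB n l s) = l + 1 - s" using s n by (simp add: fB_def cdist_eq)
      then show ?thesis using cb b1 True by simp
    next
      case F1: False
      show ?thesis
      proof (cases "s \<le> n - l \<and> even (s - l)")
        case True
        then have "s + 1 \<le> n" using n by linarith
        then have "cdist n s (s + 1) = 1" using s by (simp add: cdist_eq)
        then have "cdist n s (fB n l s) = 1" using True F1 by (simp add: fB_def)
        moreover have "b \<noteq> s" using b True F1 by (auto simp: Bpart_mem)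
        ultimately show ?thesis using cb b1 s by auto
      next
        case False
        then have "fB n l s = s" using F1 by (simp add: fB_def)
        then show ?thesis by (simp add: cdist_def)
      qed
    qed
  qed
qed

lemma first_in_F:
  assumes n: "2 * l + 2 \<le> n" "2 \<le> l" and s: "1 \<le> s" "s \<le> n"
  shows "first_in n {1, l + 1} s = fF l s"
proof (rule first_in_eq)
  show "{1, l + 1} \<subseteq> {1..n}" using n by auto
  show "s \<in> {1..n}" using s by simp
  show "fF l s \<in> {1, l + 1}" by (simp add: fF_def)
  show "\<forall>b\<in>{1, l + 1}. cdist n s (fF l s) \<le> cdist n s b"
    using n s by (auto simp: fF_def cdist_eq)
qed

lemma winner_SomeD:
  assumes "winner n m seeds S = Some a"
  shows "a \<in> S \<and> (\<forall>a'\<in>S. a' \<noteq> a \<longrightarrow> Xi n m seeds S a > Xi n m seeds S a')"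
proof -
  let ?P = "\<lambda>a. a \<in> S \<and> (\<forall>a'\<in>S. a' \<noteq> a \<longrightarrow> Xi n m seeds S a > Xi n m seeds S a')"
  have ex: "\<exists>a. ?P a" and eq: "a = (THE a. ?P a)" using assms unfolding winner_def
    by (auto split: if_splits)
  have uniq: "x = y" if "?P x" "?P y" for x y
  proof (rule ccontr)
    assume "x \<noteq> y"
    then have "Xi n m seeds S y < Xi n m seeds S x" "Xi n m seeds S x < Xi n m seeds S y"
      using that by auto
    then show False by simp
  qed
  from ex obtain x where "?P x" by blast
  then have "(THE a. ?P a) = x" using uniq by (intro the_equality) auto
  then show ?thesis using eq \<open>?P x\<close> by simp
qed

lemma winner_eqI:
  assumes "a \<in> S" "\<forall>a'\<in>S. a' \<noteq> a \<longrightarrow> Xi n m seeds S a > Xi n m seeds S a'"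
  shows "winner n m seeds S = Some a"
proof -
  let ?P = "\<lambda>a. a \<in> S \<and> (\<forall>a'\<in>S. a' \<noteq> a \<longrightarrow> Xi n m seeds S a > Xi n m seeds S a')"
  have uniq: "x = y" if "?P x" "?P y" for x y
  proof (rule ccontr)
    assume "x \<noteq> y"
    then have "Xi n m seeds S y < Xi n m seeds S x" "Xi n m seeds S x < Xi n m seeds S y"
      using that by auto
    then show False by simp
  qed
  have "(THE a. ?P a) = a" using uniq assms by (intro the_equality) auto
  then show ?thesis using assms unfolding winner_def by auto
qed

lemma Xi_pos:
  assumes "j < m" "first_in n S (seeds j) = c"
  shows "1 \<le> Xi n m seeds S c"
proof -
  have "j \<in> {j \<in> {..<m}. first_in n S (seeds j) = c}" using assms by simp
  then have "card {j \<in> {..<m}. first_in n S (seeds j) = c} > 0"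
    by (subst card_gt_0_iff) auto
  then show ?thesis unfolding Xi_def by simp
qed

lemma winner_ge2:
  assumes w: "winner n m seeds S = Some a" and m: "2 \<le> m"
    and v: "\<forall>j<m. first_in n S (seeds j) \<in> S"
  shows "2 \<le> Xi n m seeds S a"
proof (rule ccontr)
  assume "\<not> 2 \<le> Xi n m seeds S a"
  then have le: "Xi n m seeds S a \<le> 1" by simp
  have wa: "a \<in> S" "\<forall>a'\<in>S. a' \<noteq> a \<longrightarrow> Xi n m seeds S a > Xi n m seeds S a'"
    using winner_SomeD[OF w] by auto
  have all: "first_in n S (seeds j) = a" if "j < m" for j
  proof (rule ccontr)
    assume ne: "first_in n S (seeds j) \<noteq> a"
    have "1 \<le> Xi n m seeds S (first_in n S (seeds j))" using Xi_pos that by blast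
    moreover have "Xi n m seeds S (first_in n S (seeds j)) < Xi n m seeds S a"
      using wa v that ne by blast
    ultimately show False using le by simp
  qed
  then have "{j \<in> {..<m}. first_in n S (seeds j) = a} = {..<m}" by auto
  then have "Xi n m seeds S a = m" unfolding Xi_def by simp
  then show False using le m by simp
qed

lemma Xi_le1:
  assumes "\<And>j j'. j < m \<Longrightarrow> j' < m \<Longrightarrow> first_in n S (seeds j) = c \<Longrightarrow> first_in n S (seeds j') = c \<Longrightarrow> j = j'"
  shows "Xi n m seeds S c \<le> 1"
proof -
  have "card {j \<in> {..<m}. first_in n S (seeds j) = c} \<le> Suc 0"
    by (subst card_le_Suc0_iff_eq) (use assms in auto)
  then show ?thesis unfolding Xi_def by simp
qed

lemma first_in_mem:
  assumes S: "S \<subseteq> {1..n}" "S \<noteq> {}" and s: "s \<in> {1..n}"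
  shows "first_in n S s \<in> S"
proof -
  have fin: "finite S" using S(1) finite_subset by blast
  let ?k = "Min (cdist n s ` S)"
  have "?k \<in> cdist n s ` S" using fin S(2) by (intro Min_in) auto
  then obtain a where a: "a \<in> S" "cdist n s a = ?k" by auto
  have "\<forall>b\<in>S. cdist n s a \<le> cdist n s b" using a fin by auto
  then have "first_in n S s = a" using first_in_eq[OF S(1) s a(1)] by blast
  then show ?thesis using a by simp
qed

lemma card_compl_filter:
  "card {j \<in> {..<m}. \<not> P j} = m - card {j \<in> {..<m}. P j}"
proof -
  have e: "{j \<in> {..<m}. P j} \<union> {j \<in> {..<m}. \<not> P j} = {..<m}" by auto
  have "card {j \<in> {..<m}. P j} + card {j \<in> {..<m}. \<not> P j} = card ({j \<in> {..<m}. P j} \<union> {j \<in> {..<m}. \<not> P j})"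
    by (rule card_Un_disjoint[symmetric]) auto
  then have "card {j \<in> {..<m}. P j} + card {j \<in> {..<m}. \<not> P j} = m" by (simp only: e card_lessThan)
  then show ?thesis by arith
qed

lemma fA_basin: "fA n l s = c \<Longrightarrow> c \<noteq> 1 \<Longrightarrow> s = c \<or> s + 1 = c"
  unfolding fA_def by (simp split: if_split_asm)

lemma fB_basin: "fB n l s = c \<Longrightarrow> c \<noteq> l + 1 \<Longrightarrow> s = c \<or> s + 1 = c"
  unfolding fB_def by (simp split: if_split_asm)

lemma fB_eq_q: "2 * l + 2 \<le> n \<Longrightarrow> fB n l s = l + 1 \<longleftrightarrow> s \<le> l + 1"
  unfolding fB_def by (cases "s \<le> l + 1") auto

lemma fA_eq_1: "2 \<le> l \<Longrightarrow> fA n l s = 1 \<longleftrightarrow> s = 1 \<or> n - l < s"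
  unfolding fA_def by (cases "s = 1 \<or> n - l < s") auto

definition good :: "nat \<Rightarrow> (nat \<Rightarrow> nat) \<Rightarrow> bool" where
  "good m seeds = ((\<forall>j<m. seeds j \<noteq> 1) \<and>
     (\<forall>j<m. \<forall>j'<m. j \<noteq> j' \<longrightarrow> seeds j' \<noteq> seeds j \<and> seeds j' \<noteq> seeds j + 1))"

definition cq :: "nat \<Rightarrow> nat \<Rightarrow> (nat \<Rightarrow> nat) \<Rightarrow> nat" where
  "cq m l seeds = card {j \<in> {..<m}. seeds j \<in> {2..l+1}}"

definition cp :: "nat \<Rightarrow> nat \<Rightarrow> nat \<Rightarrow> (nat \<Rightarrow> nat) \<Rightarrow> nat" where
  "cp n m l seeds = card {j \<in> {..<m}. seeds j \<in> {n-l+1..n}}"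

lemma good_basin:
  assumes g: "good m seeds" and j: "j < m" "j' < m"
    and h: "seeds j = c \<or> seeds j + 1 = c" "seeds j' = c \<or> seeds j' + 1 = c"
  shows "j = j'"
proof (rule ccontr)
  assume ne: "j \<noteq> j'"
  then have "seeds j' \<noteq> seeds j \<and> seeds j' \<noteq> seeds j + 1" "seeds j \<noteq> seeds j' \<and> seeds j \<noteq> seeds j' + 1"
    using g j unfolding good_def by metis+
  then show False using h by auto
qed

context
  fixes n l m :: nat and seeds :: "nat \<Rightarrow> nat"
  assumes n: "even n" "2 * l + 2 \<le> n" "2 \<le> l" and m: "2 \<le> m"
    and sd: "seeds \<in> {..<m} \<rightarrow>\<^sub>E {1..n}" and g: "good m seeds"
begin

lemma sd_range: "j < m \<Longrightarrow> 1 \<le> seeds j \<and> seeds j \<le> n"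
proof -
  assume "j < m"
  then have "seeds j \<in> {1..n}" using PiE_mem[OF sd] by blast
  then show ?thesis by simp
qed

lemma sd_ne1: "j < m \<Longrightarrow> seeds j \<noteq> 1"
  using g unfolding good_def by auto

lemma fA_at: "j < m \<Longrightarrow> first_in n (Apart n l) (seeds j) = fA n l (seeds j)"
  using first_in_A[OF n] sd_range by blast

lemma fB_at: "j < m \<Longrightarrow> first_in n (Bpart n l) (seeds j) = fB n l (seeds j)"
  using first_in_B[OF n] sd_range by blast

lemma fF_at: "j < m \<Longrightarrow> first_in n {1, l+1} (seeds j) = fF l (seeds j)"
  using first_in_F[OF n(2,3)] sd_range by blast

lemma XA1: "Xi n m seeds (Apart n l) 1 = cp n m l seeds"
proof -
  have "{j \<in> {..<m}. first_in n (Apart n l) (seeds j) = 1} = {j \<in> {..<m}. seeds j \<in> {n-l+1..n}}"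
  proof (intro Collect_cong conj_cong refl)
    fix j assume "j \<in> {..<m}"
    then have j: "j < m" by simp
    show "first_in n (Apart n l) (seeds j) = 1 \<longleftrightarrow> seeds j \<in> {n-l+1..n}"
      unfolding fA_at[OF j] fA_eq_1[OF n(3)] using sd_range[OF j] sd_ne1[OF j] by auto
  qed
  then show ?thesis unfolding Xi_def cp_def by simp
qed

lemma XAo: "c \<noteq> 1 \<Longrightarrow> Xi n m seeds (Apart n l) c \<le> 1"
proof (rule Xi_le1)
  fix j j' assume c: "c \<noteq> 1" and j: "j < m" "j' < m"
    and h: "first_in n (Apart n l) (seeds j) = c" "first_in n (Apart n l) (seeds j') = c"
  have "seeds j = c \<or> seeds j + 1 = c" using fA_basin[OF h(1)[unfolded fA_at[OF j(1)]] c] .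
  moreover have "seeds j' = c \<or> seeds j' + 1 = c" using fA_basin[OF h(2)[unfolded fA_at[OF j(2)]] c] .
  ultimately show "j = j'" by (rule good_basin[OF g j])
qed

lemma XBq: "Xi n m seeds (Bpart n l) (l+1) = cq m l seeds"
proof -
  have "{j \<in> {..<m}. first_in n (Bpart n l) (seeds j) = l+1} = {j \<in> {..<m}. seeds j \<in> {2..l+1}}"
  proof (intro Collect_cong conj_cong refl)
    fix j assume "j \<in> {..<m}"
    then have j: "j < m" by simp
    show "first_in n (Bpart n l) (seeds j) = l+1 \<longleftrightarrow> seeds j \<in> {2..l+1}"
      unfolding fB_at[OF j] fB_eq_q[OF n(2)] using sd_range[OF j] sd_ne1[OF j] by auto
  qed
  then show ?thesis unfolding Xi_def cq_def by simp
qed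

lemma XBo: "c \<noteq> l+1 \<Longrightarrow> Xi n m seeds (Bpart n l) c \<le> 1"
proof (rule Xi_le1)
  fix j j' assume c: "c \<noteq> l+1" and j: "j < m" "j' < m"
    and h: "first_in n (Bpart n l) (seeds j) = c" "first_in n (Bpart n l) (seeds j') = c"
  have "seeds j = c \<or> seeds j + 1 = c" using fB_basin[OF h(1)[unfolded fB_at[OF j(1)]] c] .
  moreover have "seeds j' = c \<or> seeds j' + 1 = c" using fB_basin[OF h(2)[unfolded fB_at[OF j(2)]] c] .
  ultimately show "j = j'" by (rule good_basin[OF g j])
qed

lemma XFq: "Xi n m seeds {1, l+1} (l+1) = cq m l seeds"
proof -
  have "{j \<in> {..<m}. first_in n {1, l+1} (seeds j) = l+1} = {j \<in> {..<m}. seeds j \<in> {2..l+1}}"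
  proof (intro Collect_cong conj_cong refl)
    fix j assume "j \<in> {..<m}"
    then have j: "j < m" by simp
    show "first_in n {1, l+1} (seeds j) = l+1 \<longleftrightarrow> seeds j \<in> {2..l+1}"
      unfolding fF_at[OF j] using n by (simp add: fF_def)
  qed
  then show ?thesis unfolding Xi_def cq_def by simp
qed

lemma XF1: "Xi n m seeds {1, l+1} 1 = m - cq m l seeds"
proof -
  have eq: "{j \<in> {..<m}. first_in n {1, l+1} (seeds j) = 1} = {j \<in> {..<m}. \<not> seeds j \<in> {2..l+1}}"
  proof (intro Collect_cong conj_cong refl)
    fix j assume "j \<in> {..<m}"
    then have j: "j < m" by simp
    show "first_in n {1, l+1} (seeds j) = 1 \<longleftrightarrow> \<not> seeds j \<in> {2..l+1}"
      unfolding fF_at[OF j] using n by (simp add: fF_def)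
  qed
  show ?thesis unfolding Xi_def cq_def eq by (rule card_compl_filter)
qed

lemma A_ne: "1 \<in> Apart n l" using n by (simp add: Apart_mem)
lemma B_ne: "l + 1 \<in> Bpart n l" using n by (simp add: Bpart_mem)

lemma vA: "\<forall>j<m. first_in n (Apart n l) (seeds j) \<in> Apart n l"
  using first_in_mem[OF Apart_sub[OF n(2)]] A_ne sd_range by auto

lemma vB: "\<forall>j<m. first_in n (Bpart n l) (seeds j) \<in> Bpart n l"
proof (intro allI impI)
  fix j assume j: "j < m"
  have sub: "Bpart n l \<subseteq> {1..n}" by (auto simp: Bpart_def)
  have ne: "Bpart n l \<noteq> {}" using B_ne by blast
  have "seeds j \<in> {1..n}" using sd_range[OF j] by simp
  then show "first_in n (Bpart n l) (seeds j) \<in> Bpart n l" by (rule first_in_mem[OF sub ne])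
qed

lemma winA: "winner n m seeds (Apart n l) = Some 1 \<longleftrightarrow> 2 \<le> cp n m l seeds"
proof
  assume "winner n m seeds (Apart n l) = Some 1"
  then show "2 \<le> cp n m l seeds" using winner_ge2[OF _ m vA] XA1 by simp
next
  assume c: "2 \<le> cp n m l seeds"
  show "winner n m seeds (Apart n l) = Some 1"
  proof (rule winner_eqI[OF A_ne], intro ballI impI)
    fix a' assume "a' \<in> Apart n l" "a' \<noteq> 1"
    then have "Xi n m seeds (Apart n l) a' \<le> 1" using XAo by blast
    then show "Xi n m seeds (Apart n l) a' < Xi n m seeds (Apart n l) 1" using XA1 c by simp
  qed
qed

lemma winB: "winner n m seeds (Bpart n l) = Some b \<longleftrightarrow> b = l + 1 \<and> 2 \<le> cq m l seeds"
proof
  assume w: "winner n m seeds (Bpart n l) = Some b"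
  have x2: "2 \<le> Xi n m seeds (Bpart n l) b" using winner_ge2[OF w m vB] .
  have "b = l + 1"
  proof (rule ccontr)
    assume "b \<noteq> l + 1"
    then have "Xi n m seeds (Bpart n l) b \<le> 1" using XBo by blast
    then show False using x2 by simp
  qed
  then show "b = l + 1 \<and> 2 \<le> cq m l seeds" using x2 XBq by simp
next
  assume c: "b = l + 1 \<and> 2 \<le> cq m l seeds"
  show "winner n m seeds (Bpart n l) = Some b"
    unfolding c[THEN conjunct1]
  proof (rule winner_eqI[OF B_ne], intro ballI impI)
    fix a' assume "a' \<in> Bpart n l" "a' \<noteq> l + 1"
    then have "Xi n m seeds (Bpart n l) a' \<le> 1" using XBo by blast
    then show "Xi n m seeds (Bpart n l) a' < Xi n m seeds (Bpart n l) (l+1)" using XBq c by simp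
  qed
qed

lemma wins_iff:
  "wins_two_round n m seeds (Apart n l) (Bpart n l) 1 \<longleftrightarrow>
     2 \<le> cp n m l seeds \<and> 2 \<le> cq m l seeds \<and> 2 * cq m l seeds < m"
proof
  assume "wins_two_round n m seeds (Apart n l) (Bpart n l) 1"
  then obtain a b where wa: "winner n m seeds (Apart n l) = Some a"
    and wb: "winner n m seeds (Bpart n l) = Some b"
    and d: "(1 = a \<and> Xi n m seeds {a, b} a > Xi n m seeds {a, b} b) \<or>
            (1 = b \<and> Xi n m seeds {a, b} b > Xi n m seeds {a, b} a)"
    unfolding wins_two_round_def by blast
  have "b \<in> Bpart n l" using winner_SomeD[OF wb] by blast
  then have "b \<noteq> 1" using A_ne by (auto simp: Bpart_def)
  then have a1: "a = 1" and x: "Xi n m seeds {a, b} a > Xi n m seeds {a, b} b" using d by auto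
  have b: "b = l + 1" and q: "2 \<le> cq m l seeds" using winB wb by auto
  have p: "2 \<le> cp n m l seeds" using winA wa a1 by simp
  have "Xi n m seeds {1, l+1} 1 > Xi n m seeds {1, l+1} (l+1)" using x a1 b by simp
  then have "m - cq m l seeds > cq m l seeds" using XF1 XFq by simp
  then show "2 \<le> cp n m l seeds \<and> 2 \<le> cq m l seeds \<and> 2 * cq m l seeds < m" using p q by simp
next
  assume h: "2 \<le> cp n m l seeds \<and> 2 \<le> cq m l seeds \<and> 2 * cq m l seeds < m"
  have wa: "winner n m seeds (Apart n l) = Some 1" using winA h by simp
  have wb: "winner n m seeds (Bpart n l) = Some (l+1)" using winB h by simp
  have "Xi n m seeds {1, l+1} 1 > Xi n m seeds {1, l+1} (l+1)" using XF1 XFq h by (simp; arith)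
  then show "wins_two_round n m seeds (Apart n l) (Bpart n l) 1"
    unfolding wins_two_round_def using wa wb by blast
qed

end

context
  fixes I :: "'a set" and X Y Z :: "'b set"
  assumes fI: "finite I" and fX: "finite X" and fY: "finite Y" and fZ: "finite Z"
    and dXY: "X \<inter> Y = {}" and dXZ: "X \<inter> Z = {}" and dYZ: "Y \<inter> Z = {}"
begin

definition GG :: "'a set \<Rightarrow> 'a set \<Rightarrow> ('a \<Rightarrow> 'b) set" where
  "GG A B = PiE I (\<lambda>j. if j \<in> A then X else if j \<in> B then Y else Z)"

lemma GG_fib:
  assumes f: "f \<in> GG A B" and A: "A \<subseteq> I" and B: "B \<subseteq> I - A"
  shows "{j \<in> I. f j \<in> X} = A" "{j \<in> I. f j \<in> Y} = B" "f \<in> PiE I (\<lambda>_. X \<union> Y \<union> Z)"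
proof -
  have m: "j \<in> I \<Longrightarrow> f j \<in> (if j \<in> A then X else if j \<in> B then Y else Z)" for j
    using PiE_mem[OF f[unfolded GG_def]] by blast
  show "{j \<in> I. f j \<in> X} = A"
  proof (intro equalityI subsetI)
    fix j assume "j \<in> {j \<in> I. f j \<in> X}"
    then show "j \<in> A" using m[of j] dXY dXZ by (auto split: if_splits)
  next
    fix j assume "j \<in> A" then show "j \<in> {j \<in> I. f j \<in> X}" using m[of j] A by auto
  qed
  show "{j \<in> I. f j \<in> Y} = B"
  proof (intro equalityI subsetI)
    fix j assume "j \<in> {j \<in> I. f j \<in> Y}"
    then show "j \<in> B" using m[of j] dXY dYZ by (auto split: if_splits)
  next
    fix j assume "j \<in> B" then show "j \<in> {j \<in> I. f j \<in> Y}" using m[of j] B by auto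
  qed
  have "f \<in> extensional I" using f unfolding GG_def PiE_def by blast
  moreover have "\<forall>j\<in>I. f j \<in> X \<union> Y \<union> Z"
  proof
    fix j assume "j \<in> I"
    then have "f j \<in> (if j \<in> A then X else if j \<in> B then Y else Z)" by (rule m)
    then show "f j \<in> X \<union> Y \<union> Z" by (auto split: if_splits)
  qed
  ultimately show "f \<in> PiE I (\<lambda>_. X \<union> Y \<union> Z)" by (auto simp: PiE_def)
qed

definition TT :: "nat \<Rightarrow> nat \<Rightarrow> ('a set \<times> 'a set) set" where
  "TT s t = Sigma {A. A \<subseteq> I \<and> card A = s} (\<lambda>A. {B. B \<subseteq> I - A \<and> card B = t})"

lemma TT_card: "card (TT s t) = (card I choose s) * ((card I - s) choose t)"
proof -
  have fin: "finite {A. A \<subseteq> I \<and> card A = s}" using fI by auto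
  have "card (TT s t) = (\<Sum>A\<in>{A. A \<subseteq> I \<and> card A = s}. card {B. B \<subseteq> I - A \<and> card B = t})"
    unfolding TT_def using fin fI by (intro card_SigmaI) auto
  also have "\<dots> = (\<Sum>A\<in>{A. A \<subseteq> I \<and> card A = s}. (card I - s) choose t)"
  proof (rule sum.cong[OF refl])
    fix A assume "A \<in> {A. A \<subseteq> I \<and> card A = s}"
    then have "A \<subseteq> I" "card A = s" by auto
    then have "card (I - A) = card I - s" using fI by (simp add: card_Diff_subset finite_subset)
    then show "card {B. B \<subseteq> I - A \<and> card B = t} = (card I - s) choose t"
      using n_subsets[of "I - A" t] fI by simp
  qed
  also have "\<dots> = (card I choose s) * ((card I - s) choose t)"
    using n_subsets[OF fI, of s] by simp
  finally show ?thesis .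
qed

lemma GG_card:
  assumes A: "A \<subseteq> I" "card A = s" and B: "B \<subseteq> I - A" "card B = t"
  shows "card (GG A B) = card X ^ s * card Y ^ t * card Z ^ (card I - s - t)"
proof -
  have "card (GG A B) = (\<Prod>j\<in>I. card (if j \<in> A then X else if j \<in> B then Y else Z))"
    unfolding GG_def using fI by (rule card_PiE)
  also have "\<dots> = (\<Prod>j\<in>I. if j \<in> A then card X else if j \<in> B then card Y else card Z)"
    by (intro prod.cong) auto
  also have "\<dots> = (\<Prod>j\<in>I \<inter> {j. j \<in> A}. card X) * (\<Prod>j\<in>I \<inter> - {j. j \<in> A}. if j \<in> B then card Y else card Z)"
    using fI by (rule prod.If_cases)
  also have "I \<inter> {j. j \<in> A} = A" using A by auto
  also have "I \<inter> - {j. j \<in> A} = I - A" by auto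
  also have "(\<Prod>j\<in>I - A. if j \<in> B then card Y else card Z) =
      (\<Prod>j\<in>(I - A) \<inter> {j. j \<in> B}. card Y) * (\<Prod>j\<in>(I - A) \<inter> - {j. j \<in> B}. card Z)"
    using fI by (intro prod.If_cases) auto
  also have "(I - A) \<inter> {j. j \<in> B} = B" using B by auto
  also have "(I - A) \<inter> - {j. j \<in> B} = (I - A) - B" by auto
  finally have e: "card (GG A B) = card X ^ card A * (card Y ^ card B * card Z ^ card (I - A - B))"
    by simp
  have fA: "finite A" using A fI finite_subset by blast
  have fB: "finite B" using B fI finite_subset by blast
  have "card (I - A) = card I - s" using A fA by (simp add: card_Diff_subset)
  moreover have "card (I - A - B) = card (I - A) - t" using B fB by (simp add: card_Diff_subset)
  ultimately have "card (I - A - B) = card I - s - t" by simp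
  then show ?thesis using e A B by simp
qed

lemma count_fibers:
  "card {f \<in> PiE I (\<lambda>_. X \<union> Y \<union> Z). card {j \<in> I. f j \<in> X} = s \<and> card {j \<in> I. f j \<in> Y} = t}
     = (card I choose s) * ((card I - s) choose t) * (card X ^ s * card Y ^ t * card Z ^ (card I - s - t))"
proof -
  let ?L = "{f \<in> PiE I (\<lambda>_. X \<union> Y \<union> Z). card {j \<in> I. f j \<in> X} = s \<and> card {j \<in> I. f j \<in> Y} = t}"
  have eq: "?L = (\<Union>p\<in>TT s t. GG (fst p) (snd p))"
  proof (intro equalityI subsetI)
    fix f assume f: "f \<in> ?L"
    let ?A = "{j \<in> I. f j \<in> X}" and ?B = "{j \<in> I. f j \<in> Y}"
    have p: "(?A, ?B) \<in> TT s t" using f dXY unfolding TT_def by auto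
    have "f \<in> GG ?A ?B"
      unfolding GG_def
    proof (rule PiE_I)
      fix j assume j: "j \<in> I"
      have "f j \<in> X \<union> Y \<union> Z" using f j by (auto dest: PiE_mem)
      then show "f j \<in> (if j \<in> ?A then X else if j \<in> ?B then Y else Z)" using j by auto
    next
      fix j assume "j \<notin> I" then show "f j = undefined" using f by auto
    qed
    then show "f \<in> (\<Union>p\<in>TT s t. GG (fst p) (snd p))" using p by force
  next
    fix f assume "f \<in> (\<Union>p\<in>TT s t. GG (fst p) (snd p))"
    then obtain A B where p: "(A, B) \<in> TT s t" and f: "f \<in> GG A B" by auto
    have A: "A \<subseteq> I" "card A = s" and B: "B \<subseteq> I - A" "card B = t" using p unfolding TT_def by auto
    show "f \<in> ?L" using GG_fib[OF f A(1) B(1)] A B by simp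
  qed
  have finT: "finite (TT s t)"
  proof -
    have "TT s t \<subseteq> Pow I \<times> Pow I" unfolding TT_def by auto
    then show ?thesis using fI finite_subset by blast
  qed
  have "card ?L = (\<Sum>p\<in>TT s t. card (GG (fst p) (snd p)))"
    unfolding eq
  proof (rule card_UN_disjoint[OF finT])
    show "\<forall>p\<in>TT s t. finite (GG (fst p) (snd p))"
      using fI fX fY fZ unfolding GG_def by (auto intro!: finite_PiE)
    show "\<forall>p\<in>TT s t. \<forall>q\<in>TT s t. p \<noteq> q \<longrightarrow> GG (fst p) (snd p) \<inter> GG (fst q) (snd q) = {}"
    proof (intro ballI impI)
      fix p q assume p: "p \<in> TT s t" and q: "q \<in> TT s t" and ne: "p \<noteq> q"
      show "GG (fst p) (snd p) \<inter> GG (fst q) (snd q) = {}"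
      proof (rule ccontr)
        assume "GG (fst p) (snd p) \<inter> GG (fst q) (snd q) \<noteq> {}"
        then obtain f where f1: "f \<in> GG (fst p) (snd p)" and f2: "f \<in> GG (fst q) (snd q)" by blast
        have "fst p \<subseteq> I" "snd p \<subseteq> I - fst p" "fst q \<subseteq> I" "snd q \<subseteq> I - fst q"
          using p q unfolding TT_def by auto
        then have "fst p = fst q" "snd p = snd q"
          using GG_fib[OF f1] GG_fib[OF f2] by metis+
        then show False using ne by (simp add: prod_eq_iff)
      qed
    qed
  qed
  also have "\<dots> = (\<Sum>p\<in>TT s t. card X ^ s * card Y ^ t * card Z ^ (card I - s - t))"
  proof (rule sum.cong[OF refl])
    fix p assume "p \<in> TT s t"
    then show "card (GG (fst p) (snd p)) = card X ^ s * card Y ^ t * card Z ^ (card I - s - t)"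
      unfolding TT_def by (intro GG_card) auto
  qed
  also have "\<dots> = card (TT s t) * (card X ^ s * card Y ^ t * card Z ^ (card I - s - t))"
    by simp
  finally show ?thesis using TT_card by simp
qed

end

lemma card_determined:
  assumes fI: "finite I" and fU: "finite U" and k: "k \<in> I" and S: "S \<subseteq> PiE I (\<lambda>_. U)"
    and F: "\<And>f. f \<in> S \<Longrightarrow> f k = F (restrict f (I - {k}))"
  shows "card S \<le> card U ^ (card I - 1)"
proof -
  have inj: "inj_on (\<lambda>f. restrict f (I - {k})) S"
  proof (rule inj_onI)
    fix f g assume f: "f \<in> S" and g: "g \<in> S" and e: "restrict f (I - {k}) = restrict g (I - {k})"
    have fP: "f \<in> PiE I (\<lambda>_. U)" by (rule subsetD[OF S f])
    have gP: "g \<in> PiE I (\<lambda>_. U)" by (rule subsetD[OF S g])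
    show "f = g"
    proof (rule ext)
      fix x
      consider "x = k" | "x \<in> I - {k}" | "x \<notin> I" using k by blast
      then show "f x = g x"
      proof cases
        case 1
        have "f k = F (restrict f (I - {k}))" by (rule F[OF f])
        also have "\<dots> = F (restrict g (I - {k}))" by (simp only: e)
        also have "\<dots> = g k" by (rule F[OF g, symmetric])
        finally show ?thesis using 1 by simp
      next
        case 2
        have "restrict f (I - {k}) x = restrict g (I - {k}) x" by (simp only: e)
        then show ?thesis using 2 by (simp add: restrict_def)
      next
        case 3
        have "f \<in> extensional I" using fP unfolding PiE_def by (rule IntD2)
        have "g \<in> extensional I" using gP unfolding PiE_def by (rule IntD2)
        have "g x = undefined" by (rule extensional_arb[OF \<open>g \<in> extensional I\<close> 3])
        moreover have "f x = undefined" by (rule extensional_arb[OF \<open>f \<in> extensional I\<close> 3])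
        ultimately show ?thesis by simp
      qed
    qed
  qed
  have img: "(\<lambda>f. restrict f (I - {k})) ` S \<subseteq> PiE (I - {k}) (\<lambda>_. U)"
  proof
    fix h assume "h \<in> (\<lambda>f. restrict f (I - {k})) ` S"
    then obtain f where f: "f \<in> S" and h: "h = restrict f (I - {k})" by blast
    have fP: "f \<in> PiE I (\<lambda>_. U)" by (rule subsetD[OF S f])
    have "\<forall>i\<in>I - {k}. f i \<in> U" using PiE_mem[OF fP] by blast
    then show "h \<in> PiE (I - {k}) (\<lambda>_. U)" unfolding h by (simp add: restrict_PiE_iff)
  qed
  have "card S \<le> card (PiE (I - {k}) (\<lambda>_. U))"
    by (rule card_inj_on_le[OF inj img]) (rule finite_PiE, use fI fU in auto)
  also have "\<dots> = card U ^ (card I - 1)"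
    using fI k by (simp add: card_PiE)
  finally show ?thesis .
qed

lemma arith_aux: "(m + 2 * m * m) * (N::nat) = m * N + m * (m * (2 * N))"
  by (simp add: algebra_simps)

lemma le3: "a \<le> b + c \<Longrightarrow> b \<le> x \<Longrightarrow> c \<le> y \<Longrightarrow> (a::nat) \<le> x + y"
  by simp

definition Dset :: "nat \<Rightarrow> nat \<Rightarrow> (nat \<Rightarrow> nat) set" where
  "Dset n m = {f \<in> {..<m} \<rightarrow>\<^sub>E {1..n}. \<not> good m f}"

lemma Dset_card: "card (Dset n m) \<le> (m + 2 * m * m) * n ^ (m - 1)"
proof -
  let ?P = "{..<m} \<rightarrow>\<^sub>E {1..n}"
  define S1 where "S1 j = {f \<in> ?P. f j = 1}" for j
  define S2 where "S2 j j' c = {f \<in> ?P. j \<noteq> j' \<and> f j' = f j + c}" for j j' c :: nat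
  have sub: "Dset n m \<subseteq> (\<Union>j\<in>{..<m}. S1 j) \<union> (\<Union>j\<in>{..<m}. \<Union>j'\<in>{..<m}. \<Union>c\<in>{0,1::nat}. S2 j j' c)"
  proof
    fix f assume "f \<in> Dset n m"
    then have f: "f \<in> ?P" and ng: "\<not> good m f" unfolding Dset_def by auto
    from ng consider j where "j < m" "f j = 1" | j j' where "j < m" "j' < m" "j \<noteq> j'" "f j' = f j \<or> f j' = f j + 1"
      unfolding good_def by blast
    then show "f \<in> (\<Union>j\<in>{..<m}. S1 j) \<union> (\<Union>j\<in>{..<m}. \<Union>j'\<in>{..<m}. \<Union>c\<in>{0,1::nat}. S2 j j' c)"
    proof cases
      case (1 j) then show ?thesis using f unfolding S1_def by blast
    next
      case (2 j j')
      then have "f \<in> S2 j j' 0 \<or> f \<in> S2 j j' 1" using f unfolding S2_def by auto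
      then show ?thesis using 2 by blast
    qed
  qed
  have b1: "card (S1 j) \<le> n ^ (m - 1)" if "j < m" for j
  proof -
    have "card (S1 j) \<le> card {1..n} ^ (card {..<m} - 1)"
    proof (rule card_determined[of "{..<m}" "{1..n}" j "S1 j" "\<lambda>_. 1"])
      show "j \<in> {..<m}" using that by simp
      show "S1 j \<subseteq> ?P" unfolding S1_def by blast
      show "f j = 1" if "f \<in> S1 j" for f using that unfolding S1_def by blast
    qed auto
    then show ?thesis by simp
  qed
  have b2: "card (S2 j j' c) \<le> n ^ (m - 1)" if "j < m" "j' < m" for j j' c
  proof (cases "j = j'")
    case True then show ?thesis unfolding S2_def by simp
  next
    case False
    have "card (S2 j j' c) \<le> card {1..n} ^ (card {..<m} - 1)"
    proof (rule card_determined[of "{..<m}" "{1..n}" j' "S2 j j' c" "\<lambda>r. r j + c"])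
      show "j' \<in> {..<m}" using that by simp
      show "S2 j j' c \<subseteq> ?P" unfolding S2_def by blast
      show "f j' = restrict f ({..<m} - {j'}) j + c" if "f \<in> S2 j j' c" for f
        using that False \<open>j < m\<close> unfolding S2_def by simp
    qed auto
    then show ?thesis by simp
  qed
  have "card (Dset n m) \<le> card ((\<Union>j\<in>{..<m}. S1 j) \<union> (\<Union>j\<in>{..<m}. \<Union>j'\<in>{..<m}. \<Union>c\<in>{0,1::nat}. S2 j j' c))"
  proof (rule card_mono[OF _ sub])
    show "finite ((\<Union>j\<in>{..<m}. S1 j) \<union> (\<Union>j\<in>{..<m}. \<Union>j'\<in>{..<m}. \<Union>c\<in>{0,1::nat}. S2 j j' c))"
    proof (rule finite_subset)
      show "(\<Union>j\<in>{..<m}. S1 j) \<union> (\<Union>j\<in>{..<m}. \<Union>j'\<in>{..<m}. \<Union>c\<in>{0,1::nat}. S2 j j' c) \<subseteq> ?P"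
        unfolding S1_def S2_def by blast
      show "finite ?P" by (rule finite_PiE) auto
    qed
  qed
  also have u: "\<dots> \<le> card (\<Union>j\<in>{..<m}. S1 j) + card (\<Union>j\<in>{..<m}. \<Union>j'\<in>{..<m}. \<Union>c\<in>{0,1::nat}. S2 j j' c)"
    by (rule card_Un_le)
  finally have t0: "card (Dset n m) \<le> card (\<Union>j\<in>{..<m}. S1 j) + card (\<Union>j\<in>{..<m}. \<Union>j'\<in>{..<m}. \<Union>c\<in>{0,1::nat}. S2 j j' c)" .
  have t1: "card (\<Union>j\<in>{..<m}. S1 j) \<le> m * n ^ (m - 1)"
  proof -
    have "card (\<Union>j\<in>{..<m}. S1 j) \<le> (\<Sum>j\<in>{..<m}. card (S1 j))" by (rule card_UN_le) simp
    also have "\<dots> \<le> (\<Sum>j\<in>{..<m}. n ^ (m - 1))" by (rule sum_mono) (use b1 in auto)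
    finally show ?thesis by simp
  qed
  have t2: "card (\<Union>j\<in>{..<m}. \<Union>j'\<in>{..<m}. \<Union>c\<in>{0,1::nat}. S2 j j' c) \<le> m * (m * (2 * n ^ (m - 1)))"
  proof -
    have c3: "card (\<Union>c\<in>{0,1::nat}. S2 j j' c) \<le> 2 * n ^ (m - 1)" if "j < m" "j' < m" for j j'
    proof -
      have "card (\<Union>c\<in>{0,1::nat}. S2 j j' c) \<le> (\<Sum>c\<in>{0,1::nat}. card (S2 j j' c))" by (rule card_UN_le) simp
      also have "\<dots> \<le> (\<Sum>c\<in>{0,1::nat}. n ^ (m - 1))" by (rule sum_mono) (use b2 that in auto)
      finally show ?thesis by simp
    qed
    have c2: "card (\<Union>j'\<in>{..<m}. \<Union>c\<in>{0,1::nat}. S2 j j' c) \<le> m * (2 * n ^ (m - 1))" if "j < m" for j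
    proof -
      have "card (\<Union>j'\<in>{..<m}. \<Union>c\<in>{0,1::nat}. S2 j j' c) \<le> (\<Sum>j'\<in>{..<m}. card (\<Union>c\<in>{0,1::nat}. S2 j j' c))"
        by (rule card_UN_le) simp
      also have "\<dots> \<le> (\<Sum>j'\<in>{..<m}. 2 * n ^ (m - 1))" by (rule sum_mono) (use c3 that in auto)
      finally show ?thesis by simp
    qed
    have "card (\<Union>j\<in>{..<m}. \<Union>j'\<in>{..<m}. \<Union>c\<in>{0,1::nat}. S2 j j' c) \<le> (\<Sum>j\<in>{..<m}. card (\<Union>j'\<in>{..<m}. \<Union>c\<in>{0,1::nat}. S2 j j' c))"
      by (rule card_UN_le) simp
    also have "\<dots> \<le> (\<Sum>j\<in>{..<m}. m * (2 * n ^ (m - 1)))" by (rule sum_mono) (use c2 in auto)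
    finally show ?thesis by simp
  qed
  have e: "(m + 2 * m * m) * n ^ (m - 1) = m * n ^ (m - 1) + m * (m * (2 * n ^ (m - 1)))"
    by (rule arith_aux)
  have "card (Dset n m) \<le> m * n ^ (m - 1) + m * (m * (2 * n ^ (m - 1)))"
    using t0 t1 t2 by (rule le3)
  then show ?thesis unfolding e .
qed

definition Eset :: "nat \<Rightarrow> nat \<Rightarrow> nat \<Rightarrow> (nat \<Rightarrow> nat) set" where
  "Eset n m l = {f \<in> {..<m} \<rightarrow>\<^sub>E {1..n}. 2 \<le> cp n m l f \<and> 2 \<le> cq m l f \<and> 2 * cq m l f < m}"

definition Wset :: "nat \<Rightarrow> nat \<Rightarrow> nat \<Rightarrow> (nat \<Rightarrow> nat) set" where
  "Wset n m l = {f \<in> {..<m} \<rightarrow>\<^sub>E {1..n}. wins_two_round n m f (Apart n l) (Bpart n l) 1}"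

lemma cq_cp_le:
  assumes "2 * l + 2 \<le> n"
  shows "cq m l f + cp n m l f \<le> m"
proof -
  have "cq m l f + cp n m l f = card ({j \<in> {..<m}. f j \<in> {2..l+1}} \<union> {j \<in> {..<m}. f j \<in> {n-l+1..n}})"
    unfolding cq_def cp_def using assms by (intro card_Un_disjoint[symmetric]) auto
  also have "\<dots> \<le> card {..<m}" by (rule card_mono) auto
  finally show ?thesis by simp
qed

lemma Eset_card:
  assumes n: "2 * l + 2 \<le> n" "2 \<le> l"
  shows "card (Eset n m l) = (\<Sum>s=2..(m - 1) div 2. \<Sum>t=2..m - s.
            (m choose s) * ((m - s) choose t) * (l ^ s * l ^ t * (n - 2 * l) ^ (m - s - t)))"
proof -
  let ?X = "{2..l+1}" and ?Y = "{n-l+1..n}" and ?Z = "{1} \<union> {l+2..n-l}"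
  have U: "?X \<union> ?Y \<union> ?Z = {1..n}" using n by auto
  have cX: "card ?X = l" by simp
  have cY: "card ?Y = l" using n by simp
  have cZ: "card ?Z = n - 2 * l"
  proof -
    have "card ?Z = card {1::nat} + card {l+2..n-l}" by (rule card_Un_disjoint) auto
    then show ?thesis using n by simp
  qed
  define L where "L s t = {f \<in> {..<m} \<rightarrow>\<^sub>E {1..n}. cq m l f = s \<and> cp n m l f = t}" for s t
  define K where "K = Sigma {2..(m - 1) div 2} (\<lambda>s. {2..m - s})"
  have eq: "Eset n m l = (\<Union>p\<in>K. L (fst p) (snd p))"
  proof (intro equalityI subsetI)
    fix f assume f: "f \<in> Eset n m l"
    then have fP: "f \<in> {..<m} \<rightarrow>\<^sub>E {1..n}" and c: "2 \<le> cp n m l f" "2 \<le> cq m l f" "2 * cq m l f < m"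
      unfolding Eset_def by (simp_all only: mem_Collect_eq)
    have "cq m l f \<le> (m - 1) div 2" "cp n m l f \<le> m - cq m l f" using c cq_cp_le[OF n(1), of m f] by auto
    then have "(cq m l f, cp n m l f) \<in> K" using c unfolding K_def by simp
    moreover have "f \<in> L (cq m l f) (cp n m l f)" using fP unfolding L_def by (simp only: mem_Collect_eq simp_thms)
    ultimately show "f \<in> (\<Union>p\<in>K. L (fst p) (snd p))" by force
  next
    fix f assume "f \<in> (\<Union>p\<in>K. L (fst p) (snd p))"
    then obtain s t where st: "(s, t) \<in> K" and f: "f \<in> L s t" by auto
    from f have fP: "f \<in> {..<m} \<rightarrow>\<^sub>E {1..n}" and e: "cq m l f = s" "cp n m l f = t"
      unfolding L_def by (simp_all only: mem_Collect_eq)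
    from st have "2 \<le> s" "2 * s < m" "2 \<le> t" unfolding K_def by auto
    then show "f \<in> Eset n m l" using fP e unfolding Eset_def by (simp only: mem_Collect_eq simp_thms)
  qed
  have finK: "finite K" unfolding K_def by auto
  have "card (Eset n m l) = (\<Sum>p\<in>K. card (L (fst p) (snd p)))"
    unfolding eq
  proof (rule card_UN_disjoint[OF finK])
    show "\<forall>p\<in>K. finite (L (fst p) (snd p))"
    proof
      fix p
      have "L (fst p) (snd p) \<subseteq> {..<m} \<rightarrow>\<^sub>E {1..n}" unfolding L_def by blast
      moreover have "finite ({..<m} \<rightarrow>\<^sub>E {1..n})" by (rule finite_PiE) auto
      ultimately show "finite (L (fst p) (snd p))" by (rule finite_subset)
    qed
    show "\<forall>p\<in>K. \<forall>q\<in>K. p \<noteq> q \<longrightarrow> L (fst p) (snd p) \<inter> L (fst q) (snd q) = {}"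
    proof (intro ballI impI)
      fix p q :: "nat \<times> nat" assume "p \<noteq> q"
      show "L (fst p) (snd p) \<inter> L (fst q) (snd q) = {}"
      proof (rule ccontr)
        assume "L (fst p) (snd p) \<inter> L (fst q) (snd q) \<noteq> {}"
        then obtain f where "f \<in> L (fst p) (snd p)" "f \<in> L (fst q) (snd q)" by blast
        then have "fst p = fst q" "snd p = snd q" unfolding L_def by (simp_all only: mem_Collect_eq)
        then show False using \<open>p \<noteq> q\<close> by (simp add: prod_eq_iff)
      qed
    qed
  qed
  also have "\<dots> = (\<Sum>p\<in>K. (m choose fst p) * ((m - fst p) choose snd p) *
       (l ^ fst p * l ^ snd p * (n - 2 * l) ^ (m - fst p - snd p)))"
  proof (rule sum.cong[OF refl])
    fix p assume "p \<in> K"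
    have "L (fst p) (snd p) = {f \<in> PiE {..<m} (\<lambda>_. ?X \<union> ?Y \<union> ?Z).
        card {j \<in> {..<m}. f j \<in> ?X} = fst p \<and> card {j \<in> {..<m}. f j \<in> ?Y} = snd p}"
      unfolding L_def U cq_def cp_def by simp
    also have "card \<dots> = (card {..<m} choose fst p) * ((card {..<m} - fst p) choose snd p) *
        (card ?X ^ fst p * card ?Y ^ snd p * card ?Z ^ (card {..<m} - fst p - snd p))"
      by (rule count_fibers) (use n in auto)
    finally show "card (L (fst p) (snd p)) = (m choose fst p) * ((m - fst p) choose snd p) *
       (l ^ fst p * l ^ snd p * (n - 2 * l) ^ (m - fst p - snd p))"
      using cX cY cZ by simp
  qed
  also have "\<dots> = (\<Sum>s=2..(m - 1) div 2. \<Sum>t=2..m - s.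
            (m choose s) * ((m - s) choose t) * (l ^ s * l ^ t * (n - 2 * l) ^ (m - s - t)))"
    unfolding K_def by (subst sum.Sigma) (auto simp: split_beta)
  finally show ?thesis .
qed

lemma term_eq:
  assumes st: "s + t \<le> m" and n: "0 < n" "2 * l \<le> n"
  shows "real ((m choose s) * ((m - s) choose t) * (l ^ s * l ^ t * (n - 2 * l) ^ (m - s - t))) / real n ^ m
    = fact m / (fact s * fact t * fact (m - s - t)) * (real l / real n) ^ (s + t) * (1 - 2 * (real l / real n)) ^ (m - s - t)"
proof -
  have b1: "real (m choose s) = fact m / (fact s * fact (m - s))" using st by (intro binomial_fact) simp
  have b2: "real ((m - s) choose t) = fact (m - s) / (fact t * fact (m - s - t))" using st
    using binomial_fact[of t "m - s", where 'a=real] by simp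
  have nz: "real n \<noteq> 0" using n by simp
  have r: "real (n - 2 * l) = real n - 2 * real l" using n by simp
  have "1 - 2 * (real l / real n) = (real n - 2 * real l) / real n" using nz by (simp add: field_simps)
  then have p1: "(1 - 2 * (real l / real n)) ^ (m - s - t) = (real n - 2 * real l) ^ (m - s - t) / real n ^ (m - s - t)"
    by (simp add: power_divide)
  have p2: "(real l / real n) ^ (s + t) = real l ^ s * real l ^ t / real n ^ (s + t)"
    by (simp add: power_divide power_add)
  have nm: "real n ^ m = real n ^ (s + t) * real n ^ (m - s - t)"
    using st by (simp flip: power_add)
  have ff: "fact m / (fact s * fact (m - s)) * (fact (m - s) / (fact t * fact (m - s - t))) =
      (fact m / (fact s * fact t * fact (m - s - t)) :: real)"
    by (simp add: field_simps)
  show ?thesis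
    unfolding of_nat_mult b1 b2 of_nat_power r p1 p2 nm
    using nz ff[symmetric] by (simp add: field_simps)
qed

lemma Eset_p_inf:
  assumes n: "2 * l + 2 \<le> n" "2 \<le> l"
  shows "real (card (Eset n m l)) / real n ^ m = p_inf m (real l / real n)"
proof -
  have "real (card (Eset n m l)) / real n ^ m = (\<Sum>s=2..(m - 1) div 2. \<Sum>t=2..m - s.
      real ((m choose s) * ((m - s) choose t) * (l ^ s * l ^ t * (n - 2 * l) ^ (m - s - t))) / real n ^ m)"
    unfolding Eset_card[OF n] by (simp add: sum_divide_distrib)
  also have "\<dots> = p_inf m (real l / real n)"
    unfolding p_inf_def
  proof (intro sum.cong refl)
    fix s t assume s: "s \<in> {2..(m - 1) div 2}" and t: "t \<in> {2..m - s}"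
    then have "s + t \<le> m" by auto
    then show "real ((m choose s) * ((m - s) choose t) * (l ^ s * l ^ t * (n - 2 * l) ^ (m - s - t))) / real n ^ m
      = fact m / (fact s * fact t * fact (m - s - t)) * (real l / real n) ^ (s + t) * (1 - 2 * (real l / real n)) ^ (m - s - t)"
      using n by (intro term_eq) auto
  qed
  finally show ?thesis .
qed

lemma p1_close:
  assumes n: "even n" "2 * l + 2 \<le> n" "2 \<le> l" and m: "2 \<le> m"
  shows "\<bar>p1 n m l - p_inf m (real l / real n)\<bar> \<le> real (m + 2 * m * m) / real n"
proof -
  let ?P = "{..<m} \<rightarrow>\<^sub>E {1..n}"
  have finP: "finite ?P" by (rule finite_PiE) auto
  have finW: "finite (Wset n m l)" by (rule finite_subset[OF _ finP]) (unfold Wset_def, blast)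
  have finE: "finite (Eset n m l)" by (rule finite_subset[OF _ finP]) (unfold Eset_def, blast)
  have finD: "finite (Dset n m)" by (rule finite_subset[OF _ finP]) (unfold Dset_def, blast)
  have WE: "Wset n m l \<subseteq> Eset n m l \<union> Dset n m"
  proof
    fix f assume f: "f \<in> Wset n m l"
    then have fP: "f \<in> ?P" and w: "wins_two_round n m f (Apart n l) (Bpart n l) 1"
      unfolding Wset_def by (simp_all only: mem_Collect_eq)
    show "f \<in> Eset n m l \<union> Dset n m"
    proof (cases "good m f")
      case True
      then have "2 \<le> cp n m l f \<and> 2 \<le> cq m l f \<and> 2 * cq m l f < m"
        using wins_iff[OF n m fP True] w by blast
      then show ?thesis using fP unfolding Eset_def by (simp only: mem_Collect_eq Un_iff simp_thms)
    next
      case False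
      then show ?thesis using fP unfolding Dset_def by (simp only: mem_Collect_eq Un_iff simp_thms)
    qed
  qed
  have EW: "Eset n m l \<subseteq> Wset n m l \<union> Dset n m"
  proof
    fix f assume f: "f \<in> Eset n m l"
    then have fP: "f \<in> ?P" and c: "2 \<le> cp n m l f \<and> 2 \<le> cq m l f \<and> 2 * cq m l f < m"
      unfolding Eset_def by (simp_all only: mem_Collect_eq)
    show "f \<in> Wset n m l \<union> Dset n m"
    proof (cases "good m f")
      case True
      then have "wins_two_round n m f (Apart n l) (Bpart n l) 1"
        using wins_iff[OF n m fP True] c by blast
      then show ?thesis using fP unfolding Wset_def by (simp only: mem_Collect_eq Un_iff simp_thms)
    next
      case False
      then show ?thesis using fP unfolding Dset_def by (simp only: mem_Collect_eq Un_iff simp_thms)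
    qed
  qed
  have c1: "card (Wset n m l) \<le> card (Eset n m l) + card (Dset n m)"
    using card_mono[OF _ WE] card_Un_le[of "Eset n m l" "Dset n m"] finE finD by fastforce
  have c2: "card (Eset n m l) \<le> card (Wset n m l) + card (Dset n m)"
    using card_mono[OF _ EW] card_Un_le[of "Wset n m l" "Dset n m"] finW finD by fastforce
  have cd: "real (card (Dset n m)) \<le> real (m + 2 * m * m) * real n ^ (m - 1)"
    using Dset_card[of n m] by (metis of_nat_le_iff of_nat_mult of_nat_power)
  have p1e: "p1 n m l = real (card (Wset n m l)) / real n ^ m"
    unfolding p1_def Wset_def ..
  have pie: "p_inf m (real l / real n) = real (card (Eset n m l)) / real n ^ m"
    using Eset_p_inf[OF n(2,3)] by simp
  have npos: "0 < real n" using n by simp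
  have nm: "real n ^ m = real n * real n ^ (m - 1)" using m by (simp flip: power_Suc)
  have "\<bar>real (card (Wset n m l)) - real (card (Eset n m l))\<bar> \<le> real (card (Dset n m))"
    using c1 c2 by linarith
  also have "\<dots> \<le> real (m + 2 * m * m) * real n ^ (m - 1)" by (rule cd)
  finally have d: "\<bar>real (card (Wset n m l)) - real (card (Eset n m l))\<bar> \<le> real (m + 2 * m * m) * real n ^ (m - 1)" .
  have "\<bar>p1 n m l - p_inf m (real l / real n)\<bar> = \<bar>real (card (Wset n m l)) - real (card (Eset n m l))\<bar> / real n ^ m"
    unfolding p1e pie using npos by (simp add: diff_divide_distrib[symmetric] abs_divide)
  also have "\<dots> \<le> real (m + 2 * m * m) * real n ^ (m - 1) / real n ^ m"
    using d npos by (intro divide_right_mono) auto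
  also have "\<dots> = real (m + 2 * m * m) / real n"
    unfolding nm using npos by (simp add: field_simps)
  finally show ?thesis .
qed

lemma analytic_core:
  fixes g :: "real \<Rightarrow> real" and x :: "nat \<Rightarrow> real" and E :: "real set"
  assumes cont: "continuous_on UNIV g"
    and E: "E = {\<eta> \<in> {0..1/2}. \<forall>\<eta>'\<in>{0..1/2}. g \<eta>' \<le> g \<eta>}"
    and e0: "\<eta>0 \<in> E"
    and xin: "eventually (\<lambda>k. x k \<in> {0..1/2}) sequentially"
    and near: "\<And>\<epsilon>. \<epsilon> > 0 \<Longrightarrow> eventually (\<lambda>k. g (x k) > g \<eta>0 - \<epsilon>) sequentially"
  shows "(\<lambda>k. infdist (x k) E) \<longlonglongrightarrow> 0"
proof (rule tendsto_iff[THEN iffD2], intro allI impI)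
  fix \<delta> :: real assume d: "\<delta> > 0"
  have Mmax: "\<And>y. y \<in> {0..1/2} \<Longrightarrow> g y \<le> g \<eta>0" using e0 unfolding E by blast
  define K where "K = {0..1/2} \<inter> {x. \<delta> \<le> infdist x E}"
  have small: "eventually (\<lambda>k. x k \<notin> K) sequentially"
  proof (cases "K = {}")
    case True then show ?thesis by simp
  next
    case False
    have cl: "closed {x. \<delta> \<le> infdist x E}"
      by (rule closed_Collect_le) (intro continuous_intros)+
    have cK: "compact K" unfolding K_def by (rule compact_Int_closed[OF compact_Icc cl])
    obtain x1 where x1: "x1 \<in> K" and x1max: "\<forall>y\<in>K. g y \<le> g x1"
      using continuous_attains_sup[OF cK False continuous_on_subset[OF cont]] by blast
    have x1E: "x1 \<notin> E"
    proof
      assume "x1 \<in> E"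
      then have "infdist x1 E = 0" by simp
      then show False using x1 d unfolding K_def by simp
    qed
    have x1I: "x1 \<in> {0..1/2}" using x1 unfolding K_def by blast
    then obtain y where y: "y \<in> {0..1/2}" "g x1 < g y" using x1E unfolding E by force
    have lt: "g x1 < g \<eta>0" using Mmax[OF y(1)] y(2) by simp
    have "eventually (\<lambda>k. g (x k) > g \<eta>0 - (g \<eta>0 - g x1)) sequentially"
      using near[of "g \<eta>0 - g x1"] lt by simp
    then show ?thesis
    proof (rule eventually_mono)
      fix k assume "g (x k) > g \<eta>0 - (g \<eta>0 - g x1)"
      then have "g (x k) > g x1" by simp
      then show "x k \<notin> K" using x1max by force
    qed
  qed
  show "eventually (\<lambda>k. dist (infdist (x k) E) 0 < \<delta>) sequentially"
    using small xin
  proof (rule eventually_elim2)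
    fix k assume "x k \<notin> K" "x k \<in> {0..1/2}"
    then have "infdist (x k) E < \<delta>" unfolding K_def by auto
    then show "dist (infdist (x k) E) 0 < \<delta>" using infdist_nonneg[of "x k" E] by simp
  qed
qed

lemma p_inf_cont: "continuous_on UNIV (p_inf m)"
  unfolding p_inf_def[abs_def] by (intro continuous_intros)

lemma floor_facts:
  fixes e :: real and k :: nat
  assumes e: "0 < e" "e < 1/2" and k1: "1 / e < real k" and k2: "1 / (1 - 2 * e) < real k"
  shows "nat \<lfloor>real (2 * k) * e\<rfloor> \<in> {2..k - 1}"
proof -
  have kpos: "0 < real k" using k1 e by (smt (verit) divide_pos_pos)
  have "1 < real k * e" using k1 e by (simp add: field_simps)
  then have a: "2 \<le> real (2 * k) * e" by simp
  have "1 < real k * (1 - 2 * e)" using k2 e by (simp add: field_simps)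
  then have b: "real (2 * k) * e \<le> real k - 1" by (simp add: algebra_simps)
  have f2: "2 \<le> \<lfloor>real (2 * k) * e\<rfloor>" using a by (simp add: le_floor_iff)
  have f3: "\<lfloor>real (2 * k) * e\<rfloor> \<le> int k - 1"
    using b by (simp add: floor_le_iff) linarith
  have "nat 2 \<le> nat \<lfloor>real (2 * k) * e\<rfloor>" using f2 by (rule nat_mono)
  moreover have "nat \<lfloor>real (2 * k) * e\<rfloor> \<le> nat (int k - 1)" using f3 by (rule nat_mono)
  moreover have "nat (int k - 1) = k - 1" by simp
  ultimately show ?thesis by simp
qed

lemma floor_approx:
  fixes e :: real and k :: nat
  assumes e: "0 < e" and k: "0 < k"
  shows "\<bar>real (nat \<lfloor>real (2 * k) * e\<rfloor>) / real (2 * k) - e\<bar> \<le> 1 / real (2 * k)"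
proof -
  let ?y = "real (2 * k) * e"
  have nn: "0 \<le> \<lfloor>?y\<rfloor>" using e by simp
  have r: "real (nat \<lfloor>?y\<rfloor>) = real_of_int \<lfloor>?y\<rfloor>" using nn by simp
  have l1: "real_of_int \<lfloor>?y\<rfloor> \<le> ?y" by (rule of_int_floor_le)
  have l2: "?y - 1 < real_of_int \<lfloor>?y\<rfloor>" by linarith
  have np: "0 < real (2 * k)" using k by simp
  have "\<bar>real_of_int \<lfloor>?y\<rfloor> - ?y\<bar> \<le> 1" using l1 l2 by linarith
  then have "\<bar>real_of_int \<lfloor>?y\<rfloor> - ?y\<bar> / real (2 * k) \<le> 1 / real (2 * k)"
    using np by (intro divide_right_mono) auto
  moreover have "real_of_int \<lfloor>?y\<rfloor> / real (2 * k) - e = (real_of_int \<lfloor>?y\<rfloor> - ?y) / real (2 * k)"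
    using np by (simp add: field_simps)
  then have "\<bar>real_of_int \<lfloor>?y\<rfloor> - ?y\<bar> / real (2 * k) = \<bar>real_of_int \<lfloor>?y\<rfloor> / real (2 * k) - e\<bar>"
    using np by (simp only: abs_divide)
  ultimately show ?thesis unfolding r by simp
qed

theorem mainTheorem12:
  fixes m :: nat and lopt :: "nat \<Rightarrow> nat"
  assumes inside: "Estar m \<subseteq> {0<..<1/2}"
    and lopt: "\<And>n. even n \<Longrightarrow> 6 \<le> n \<Longrightarrow>
                 lopt n \<in> {2..n div 2 - 1} \<and>
                 (\<forall>l \<in> {2..n div 2 - 1}. p1 n m l \<le> p1 n m (lopt n))"
  shows "(\<lambda>k. INF \<eta>\<in>Estar m. \<bar>real (lopt (2 * k)) / real (2 * k) - \<eta>\<bar>) \<longlonglongrightarrow> 0 \<and>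
         (\<forall>\<eta>opt. Estar m = {\<eta>opt} \<longrightarrow>
           (\<lambda>k. real (lopt (2 * k)) / real (2 * k)) \<longlonglongrightarrow> \<eta>opt)"
proof -
  define g where "g = p_inf m"
  have cont: "continuous_on UNIV g" unfolding g_def by (rule p_inf_cont)
  have m2: "2 \<le> m"
  proof (rule ccontr)
    assume "\<not> 2 \<le> m"
    then have "(m - 1) div 2 = 0" by simp
    then have z: "p_inf m x = 0" for x unfolding p_inf_def by simp
    have "0 \<in> Estar m" unfolding Estar_def by (simp add: z)
    then show False using inside by auto
  qed
  have "\<exists>x\<in>{0..1/2}. \<forall>y\<in>{0..1/2}. g y \<le> g x"
  proof (rule continuous_attains_sup[OF compact_Icc])
    show "{0..1/2::real} \<noteq> {}" by simp
    show "continuous_on {0..1/2} g" by (rule continuous_on_subset[OF cont]) simp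
  qed
  then obtain \<eta>0 where e0I: "\<eta>0 \<in> {0..1/2}" and e0max: "\<forall>y\<in>{0..1/2}. g y \<le> g \<eta>0"
    by blast
  have e0: "\<eta>0 \<in> Estar m" unfolding Estar_def using e0I e0max unfolding g_def by blast
  have e0in: "0 < \<eta>0" "\<eta>0 < 1/2" using inside e0 by auto
  have E: "Estar m = {\<eta> \<in> {0..1/2}. \<forall>\<eta>'\<in>{0..1/2}. g \<eta>' \<le> g \<eta>}" unfolding Estar_def g_def ..
  define x where "x k = real (lopt (2 * k)) / real (2 * k)" for k
  define C where "C = real (m + 2 * m * m)"
  have lk: "lopt (2 * k) \<in> {2..k - 1} \<and> (\<forall>l \<in> {2..k - 1}. p1 (2 * k) m l \<le> p1 (2 * k) m (lopt (2 * k)))"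
    if "3 \<le> k" for k
    using lopt[of "2 * k"] that by simp
  have close: "\<bar>p1 (2 * k) m l - g (real l / real (2 * k))\<bar> \<le> C / real (2 * k)"
    if "l \<in> {2..k - 1}" for k l
    unfolding g_def C_def using that m2 by (intro p1_close) auto
  have xin: "eventually (\<lambda>k. x k \<in> {0..1/2}) sequentially"
    unfolding eventually_sequentially
  proof (intro exI allI impI)
    fix k :: nat assume "3 \<le> k"
    then have "lopt (2 * k) \<le> k - 1" using lk by auto
    then have "real (lopt (2 * k)) \<le> real k" by simp
    then show "x k \<in> {0..1/2}" unfolding x_def using \<open>3 \<le> k\<close> by (simp add: field_simps)
  qed
  define lf where "lf k = nat \<lfloor>real (2 * k) * \<eta>0\<rfloor>" for k
  obtain N :: nat where N: "1 / \<eta>0 + 1 / (1 - 2 * \<eta>0) + 3 < real N"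
    using reals_Archimedean2 by blast
  have Npos: "0 < 1 / \<eta>0" "0 < 1 / (1 - 2 * \<eta>0)" using e0in by auto
  have lfin: "eventually (\<lambda>k. lf k \<in> {2..k - 1} \<and> 3 \<le> k) sequentially"
    unfolding eventually_sequentially
  proof (intro exI allI impI)
    fix k assume k: "N \<le> k"
    then have "real N \<le> real k" by simp
    then have "1 / \<eta>0 < real k" "1 / (1 - 2 * \<eta>0) < real k" "3 < real k" using N Npos by linarith+
    then show "lf k \<in> {2..k - 1} \<and> 3 \<le> k" unfolding lf_def using floor_facts[OF e0in] by auto
  qed
  have ylim: "(\<lambda>k. real (lf k) / real (2 * k)) \<longlonglongrightarrow> \<eta>0"
  proof (rule LIM_zero_cancel, rule Lim_null_comparison)
    show "eventually (\<lambda>k. norm (real (lf k) / real (2 * k) - \<eta>0) \<le> 1 / real k) sequentially"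
      unfolding eventually_sequentially
    proof (intro exI allI impI)
      fix k :: nat assume k: "1 \<le> k"
      have "norm (real (lf k) / real (2 * k) - \<eta>0) \<le> 1 / real (2 * k)"
        unfolding lf_def real_norm_def using floor_approx[OF e0in(1)] k by auto
      also have "\<dots> \<le> 1 / real k" using k by (simp add: field_simps)
      finally show "norm (real (lf k) / real (2 * k) - \<eta>0) \<le> 1 / real k" .
    qed
    show "(\<lambda>k. 1 / real k) \<longlonglongrightarrow> 0" by (rule lim_const_over_n)
  qed
  have glim: "(\<lambda>k. g (real (lf k) / real (2 * k))) \<longlonglongrightarrow> g \<eta>0"
  proof (rule isCont_tendsto_compose[OF _ ylim])
    show "isCont g \<eta>0" using cont by (simp add: continuous_on_eq_continuous_at)
  qed
  have near: "eventually (\<lambda>k. g (x k) > g \<eta>0 - \<epsilon>) sequentially" if eps: "\<epsilon> > 0" for \<epsilon>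
  proof -
    have ev1: "eventually (\<lambda>k. g (real (lf k) / real (2 * k)) > g \<eta>0 - \<epsilon> / 2) sequentially"
      using order_tendstoD(1)[OF glim] eps by simp
    have ev2: "eventually (\<lambda>k. C / real k < \<epsilon> / 2) sequentially"
    proof (rule order_tendstoD(2)[OF lim_const_over_n[of C]])
      show "0 < \<epsilon> / 2" using eps by simp
    qed
    show ?thesis
      using eventually_conj[OF ev1 eventually_conj[OF ev2 lfin]]
    proof (rule eventually_mono)
      fix k assume h: "g (real (lf k) / real (2 * k)) > g \<eta>0 - \<epsilon> / 2 \<and>
        C / real k < \<epsilon> / 2 \<and> lf k \<in> {2..k - 1} \<and> 3 \<le> k"
      then have a1: "g (real (lf k) / real (2 * k)) > g \<eta>0 - \<epsilon> / 2"
        and a2: "C / real k < \<epsilon> / 2" and a3: "lf k \<in> {2..k - 1} \<and> 3 \<le> k" by blast+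
      have L: "lopt (2 * k) \<in> {2..k - 1}" and opt: "p1 (2 * k) m (lf k) \<le> p1 (2 * k) m (lopt (2 * k))"
        using lk[of k] a3 by auto
      have c1: "\<bar>p1 (2 * k) m (lopt (2 * k)) - g (x k)\<bar> \<le> C / real (2 * k)"
        unfolding x_def using close[OF L] .
      have c2: "\<bar>p1 (2 * k) m (lf k) - g (real (lf k) / real (2 * k))\<bar> \<le> C / real (2 * k)"
        using close a3 by blast
      have "C / real (2 * k) + C / real (2 * k) = C / real k" by (simp add: field_simps)
      then show "g (x k) > g \<eta>0 - \<epsilon>" using c1 c2 opt a1 a2 by linarith
    qed
  qed
  have core: "(\<lambda>k. infdist (x k) (Estar m)) \<longlonglongrightarrow> 0"
    by (rule analytic_core[OF cont E e0 xin near])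
  have ne: "Estar m \<noteq> {}" using e0 by blast
  have INFeq: "(INF \<eta>\<in>Estar m. \<bar>real (lopt (2 * k)) / real (2 * k) - \<eta>\<bar>) = infdist (x k) (Estar m)" for k
    unfolding infdist_notempty[OF ne] x_def dist_real_def ..
  have part1: "(\<lambda>k. INF \<eta>\<in>Estar m. \<bar>real (lopt (2 * k)) / real (2 * k) - \<eta>\<bar>) \<longlonglongrightarrow> 0"
    unfolding INFeq by (rule core)
  have part2: "(\<lambda>k. real (lopt (2 * k)) / real (2 * k)) \<longlonglongrightarrow> \<eta>opt" if s: "Estar m = {\<eta>opt}" for \<eta>opt
  proof -
    have "(\<lambda>k. \<bar>x k - \<eta>opt\<bar>) \<longlonglongrightarrow> 0" using core unfolding s by (simp add: dist_real_def)
    then have "(\<lambda>k. x k - \<eta>opt) \<longlonglongrightarrow> 0" by (simp only: tendsto_rabs_zero_iff)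
    then have "x \<longlonglongrightarrow> \<eta>opt" by (rule LIM_zero_cancel)
    then show ?thesis unfolding x_def .
  qed
  show ?thesis using part1 part2 by blast
qed

end
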